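(* Let $\mathcal H=\{h_1,\dots,h_k\}$ be an admissible set of $k\ge2$ distinct integers with $|h_i|\le h$ for all $i$. Then \[ 1\ll\beta(\mathcal H)\ll \log\log 10h, \] and there is a constant $b_k$ depending only on $k$ such that \[ \mathfrak S(\mathcal H)\ll(\log\log 10h)^{b_k}. \] The implied constants depend only on $k$.
   Context: For a prime $p$, $\nu_p$ is the number of distinct residue classes mod $p$ containing an element of $\mathcal H$. The set $\mathcal H$ is admissible if $\nu_p<p$ for all primes $p$. Define \[ \beta(\mathcal H)=\sum_p\frac{(k-\nu_p)\log p}{p},\qquad \mathfrak S(\mathcal H)=\prod_p\Big(1-\frac{\nu_p}{p}\Big)\Big(1-\frac1p\Big)^{-k}. \] *)

theory Defs
  imports "HOL-Analysis.Analysis" "HOL-Computational_Algebra.Primes"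
begin

definition nu :: "nat \<Rightarrow> int set \<Rightarrow> nat" where
  "nu p H = card ((\<lambda>x. x mod int p) ` H)"

definition admissible :: "int set \<Rightarrow> bool" where
  "admissible H \<longleftrightarrow> (\<forall>p. prime p \<longrightarrow> nu p H < p)"

text \<open>beta(H) = sum over primes p of (k - nu_p) log p / p, with k = card H.
  Only finitely many terms are nonzero for finite H.\<close>
definition beta :: "int set \<Rightarrow> real" where
  "beta H = (\<Sum>\<^sub>\<infinity>p\<in>{p::nat. prime p}.
      (real (card H) - real (nu p H)) * ln (real p) / real p)"

definition sing_series :: "int set \<Rightarrow> real" where
  "sing_series H = (\<Prod>n. if prime n
      then (1 - real (nu n H) / real n) * (1 - 1 / real n) powi (- int (card H))
      else 1)"

end

theory Submission
  imports Defs
begin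

lemma prod_primes_dvd:
  fixes D :: nat
  assumes "finite F" "\<And>p. p \<in> F \<Longrightarrow> prime p \<and> p dvd D"
  shows "\<Prod>F dvd D"
  using assms
proof (induction F rule: finite_induct)
  case empty then show ?case by simp
next
  case (insert p F)
  have IH: "\<Prod>F dvd D" using insert by auto
  have pp: "prime p" "p dvd D" using insert.prems by auto
  have "\<not> p dvd \<Prod>F"
  proof
    assume "p dvd \<Prod>F"
    then obtain q where "q \<in> F" "p dvd q" using prime_dvd_prod_iff[OF insert.hyps(1) pp(1)] by auto
    moreover have "prime q" using insert.prems \<open>q \<in> F\<close> by auto
    ultimately have "p = q" using pp(1) by (simp add: primes_dvd_imp_eq)
    with \<open>q \<in> F\<close> insert.hyps(2) show False by simp
  qed
  then have "coprime p (\<Prod>F)" using pp(1) by (simp add: prime_imp_coprime)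
  then have "p * \<Prod>F dvd D" using IH pp(2) by (simp add: divides_mult)
  then show ?case using insert.hyps by simp
qed

lemma sum_ln_primes_dvd:
  assumes "m \<ge> (1::nat)" "finite S"
  shows "(\<Sum>p\<in>{p\<in>S. prime p \<and> p dvd m}. ln (real p)) \<le> ln (real m)"
proof -
  let ?F = "{p\<in>S. prime p \<and> p dvd m}"
  have fin: "finite ?F" using assms by simp
  have "\<Prod>?F dvd m" by (rule prod_primes_dvd[OF fin]) auto
  then have le: "\<Prod>?F \<le> m" using assms by (simp add: dvd_imp_le)
  have "(\<Sum>p\<in>?F. ln (real p)) = ln (\<Prod>p\<in>?F. real p)"
    by (subst ln_prod) (use fin in \<open>auto simp: prime_gt_0_nat\<close>)
  also have "(\<Prod>p\<in>?F. real p) = real (\<Prod>?F)" by simp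
  also have "real (\<Prod>?F) \<le> real m" using le by linarith
  then have "ln (real (\<Prod>?F)) \<le> ln (real m)"
    using assms by (subst ln_le_cancel_iff) (auto intro!: prod_pos simp: prime_gt_0_nat)
  finally show ?thesis .
qed

lemma card_multiples_ge:
  assumes "p > (0::nat)"
  shows "n div p \<le> card {m\<in>{1..n}. p dvd m}"
proof -
  have "(\<lambda>j. p * j) ` {1..n div p} \<subseteq> {m\<in>{1..n}. p dvd m}"
    using assms by (auto simp: less_eq_div_iff_mult_less_eq mult.commute)
  moreover have "inj_on (\<lambda>j. p * j) {1..n div p}" using assms by (auto simp: inj_on_def)
  ultimately have "card {1..n div p} \<le> card {m\<in>{1..n}. p dvd m}"
    by (intro card_inj_on_le) auto
  then show ?thesis by simp
qed

lemma div_ge_half: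
  assumes "1 \<le> p" "p \<le> (n::nat)"
  shows "real n / (2 * real p) \<le> real (n div p)"
proof -
  have q1: "n div p \<ge> 1" using assms by (simp add: Suc_le_eq div_greater_zero_iff)
  have "n = p * (n div p) + n mod p" by simp
  moreover have "n mod p < p" using assms by simp
  ultimately have "n < p * (n div p) + p" by linarith
  then have "n < p * (n div p + 1)" by (simp add: algebra_simps)
  then have "real n < real p * (real (n div p) + 1)" by (metis of_nat_1 of_nat_add of_nat_less_iff of_nat_mult)
  also have "\<dots> \<le> real p * (2 * real (n div p))" using q1 by (intro mult_left_mono) auto
  finally show ?thesis using assms by (simp add: field_simps)
qed

definition Asum :: "nat \<Rightarrow> real" where
  "Asum n = (\<Sum>p\<in>{p\<in>{..n}. prime p}. ln (real p) / real p)"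

lemma Asum_bound:
  assumes "n \<ge> 1"
  shows "Asum n \<le> 2 * ln (real n)"
proof -
  let ?Pr = "{p\<in>{..n}. prime p}"
  have "(\<Sum>m\<in>{1..n}. \<Sum>p\<in>{p\<in>?Pr. p dvd m}. ln (real p)) \<le> (\<Sum>m\<in>{1..n}. ln (real m))"
    by (intro sum_mono) (use sum_ln_primes_dvd[of _ "{..n}"] in \<open>auto simp: conj_assoc\<close>)
  also have "\<dots> \<le> (\<Sum>m\<in>{1..n}. ln (real n))"
    by (intro sum_mono) auto
  also have "\<dots> = real n * ln (real n)" by simp
  finally have S1: "(\<Sum>m\<in>{1..n}. \<Sum>p\<in>{p\<in>?Pr. p dvd m}. ln (real p)) \<le> real n * ln (real n)" .
  have "(\<Sum>m\<in>{1..n}. \<Sum>p\<in>{p\<in>?Pr. p dvd m}. ln (real p)) =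
        (\<Sum>p\<in>?Pr. \<Sum>m | m \<in> {1..n} \<and> p dvd m. ln (real p))"
    by (rule sum.swap_restrict) auto
  also have "\<dots> = (\<Sum>p\<in>?Pr. real (card {m\<in>{1..n}. p dvd m}) * ln (real p))"
    by simp
  finally have S2: "(\<Sum>p\<in>?Pr. real (card {m\<in>{1..n}. p dvd m}) * ln (real p)) \<le> real n * ln (real n)"
    using S1 by simp
  have "(\<Sum>p\<in>?Pr. (real n / 2) * (ln (real p) / real p)) \<le>
        (\<Sum>p\<in>?Pr. real (card {m\<in>{1..n}. p dvd m}) * ln (real p))"
  proof (intro sum_mono)
    fix p assume p: "p \<in> ?Pr"
    then have p1: "1 \<le> p" "p \<le> n" "prime p" using prime_ge_1_nat by auto
    have "real n / 2 * (ln (real p) / real p) = (real n / (2 * real p)) * ln (real p)" by simp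
    also have "\<dots> \<le> real (n div p) * ln (real p)"
      using div_ge_half[OF p1(1,2)] p1 by (intro mult_right_mono) auto
    also have "\<dots> \<le> real (card {m\<in>{1..n}. p dvd m}) * ln (real p)"
      using card_multiples_ge[of p n] p1 by (intro mult_right_mono) auto
    finally show "real n / 2 * (ln (real p) / real p) \<le> real (card {m\<in>{1..n}. p dvd m}) * ln (real p)" .
  qed
  with S2 have "(real n / 2) * Asum n \<le> real n * ln (real n)"
    unfolding Asum_def by (simp add: sum_distrib_left)
  then show ?thesis using assms by (simp add: field_simps)
qed

definition Bsum :: "nat \<Rightarrow> real" where
  "Bsum n = (\<Sum>p\<in>{p\<in>{..n}. prime p}. 1 / real p)"

lemma Bsum_mono: "m \<le> n \<Longrightarrow> Bsum m \<le> Bsum n"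
  unfolding Bsum_def by (intro sum_mono2) auto

lemma Bsum_2: "Bsum 2 = 1/2"
proof -
  have "{p\<in>{..2::nat}. prime p} = {2}"
    by (auto intro: antisym dest: prime_ge_2_nat)
  then show ?thesis unfolding Bsum_def by simp
qed

lemma Bsum_step: "Bsum (2^2^Suc J) \<le> Bsum (2^2^J) + 4"
proof -
  define N where "N = (2::nat)^2^J"
  define N' where "N' = (2::nat)^2^Suc J"
  have NN: "N \<le> N'" unfolding N_def N'_def by (intro power_increasing) auto
  have N2: "N \<ge> 2" unfolding N_def
    by (metis One_nat_def le_refl one_le_numeral one_le_power power_increasing power_one_right)
  have lnN: "ln (real N) = 2^J * ln 2" unfolding N_def by (simp add: ln_realpow)
  have lnN': "ln (real N') = 2 * 2^J * ln 2" unfolding N'_def by (simp add: ln_realpow)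
  have split: "{p\<in>{..N'}. prime p} = {p\<in>{..N}. prime p} \<union> {p\<in>{N<..N'}. prime p}" using NN by auto
  have "Bsum N' = Bsum N + (\<Sum>p\<in>{p\<in>{N<..N'}. prime p}. 1 / real p)"
    unfolding Bsum_def split by (subst sum.union_disjoint) auto
  also have "(\<Sum>p\<in>{p\<in>{N<..N'}. prime p}. 1 / real p) \<le>
             (\<Sum>p\<in>{p\<in>{N<..N'}. prime p}. (ln (real p) / real p) / ln (real N))"
  proof (intro sum_mono)
    fix p assume p: "p \<in> {p\<in>{N<..N'}. prime p}"
    have "ln (real N) \<le> ln (real p)" using p N2 by auto
    moreover have "ln (real N) > 0" using N2 by simp
    ultimately show "1 / real p \<le> ln (real p) / real p / ln (real N)"
      using p by (auto simp: field_simps)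
  qed
  also have "\<dots> \<le> (\<Sum>p\<in>{p\<in>{..N'}. prime p}. (ln (real p) / real p) / ln (real N))"
    using N2 by (intro sum_mono2) (auto intro!: divide_nonneg_nonneg mult_nonneg_nonneg ln_ge_zero simp: Suc_le_eq prime_gt_0_nat)
  also have "\<dots> = Asum N' / ln (real N)" unfolding Asum_def by (simp add: sum_divide_distrib)
  also have "\<dots> \<le> 2 * ln (real N') / ln (real N)"
    using Asum_bound[of N'] NN N2 by (intro divide_right_mono) auto
  also have "\<dots> = 4" using lnN lnN' by simp
  finally show ?thesis unfolding N_def N'_def by simp
qed

lemma Bsum_pow: "Bsum (2^2^J) \<le> 1/2 + 4 * real J"
proof (induction J)
  case 0 then show ?case using Bsum_2 by simp
next
  case (Suc J) then show ?case using Bsum_step[of J] by simp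
qed

lemma Bsum_bound:
  assumes "y \<ge> 3"
  shows "Bsum y \<le> 8 + 6 * ln (ln (real y))"
proof -
  define L where "L = log 2 (log 2 (real y))"
  have ly: "log 2 (real y) > 1" using assms by (simp add: less_log_iff)
  have L0: "L > 0" unfolding L_def using ly by simp
  define J where "J = nat \<lceil>L\<rceil>"
  have J1: "real J \<ge> L" "real J \<le> L + 1" unfolding J_def using L0 by linarith+
  have "log 2 (real y) = 2 powr L" unfolding L_def using ly by simp
  also have "\<dots> \<le> 2 powr (real J)" using J1 by simp
  also have "\<dots> = 2 ^ J" by (simp add: powr_realpow)
  finally have lj: "log 2 (real y) \<le> 2 ^ J" .
  have "real y = 2 powr (log 2 (real y))" using assms by simp
  also have "\<dots> \<le> 2 powr (real (2^J))" using lj by (intro powr_mono) auto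
  also have "\<dots> = 2 ^ (2^J)" using powr_realpow[of 2 "2^J"] by simp
  finally have "real y \<le> 2 ^ (2^J)" .
  then have "y \<le> 2^2^J" by (metis of_nat_le_iff of_nat_numeral of_nat_power)
  then have "Bsum y \<le> 1/2 + 4 * real J" using Bsum_mono Bsum_pow order_trans by blast
  also have "\<dots> \<le> 4.5 + 4 * L" using J1 by simp
  also have "L = (ln (ln (real y)) + ln (1 / ln 2)) / ln 2"
    unfolding L_def log_def using assms by (simp add: ln_div)
  finally have B: "Bsum y \<le> 4.5 + 4 * ((ln (ln (real y)) + ln (1 / ln 2)) / ln 2)" .
  have l2: "ln 2 \<ge> (2/3::real)" by (rule ln2_ge_two_thirds)
  have "1 / ln 2 \<le> (1.5::real)" using l2 by (simp add: field_simps)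
  also have "(1.5::real) \<le> exp (1/2)" using exp_ge_add_one_self[of "1/2::real"] by simp
  finally have "ln (1 / ln 2) \<le> ln (exp (1/2::real))" using l2 by (subst ln_le_cancel_iff) auto
  then have c: "ln (1 / ln 2) \<le> (1/2::real)" by simp
  have c0: "ln (1 / ln (2::real)) \<ge> 0" using ln_2_less_1 by simp
  have lly: "ln (ln (real y)) \<ge> 0"
  proof -
    have "exp 1 \<le> (3::real)" using exp_le by simp
    then have "1 \<le> ln (real y)" using assms by (subst ln_ge_iff) auto
    then show ?thesis by simp
  qed
  have i32: "1 / ln 2 \<le> (3/2::real)" using l2 by (simp add: field_simps)
  have "(ln (ln (real y)) + ln (1 / ln 2)) / ln 2 \<le> (ln (ln (real y)) + 1/2) / ln 2"
    using c l2 by (intro divide_right_mono) auto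
  also have "\<dots> = (ln (ln (real y)) + 1/2) * (1 / ln 2)" by simp
  also have "\<dots> \<le> (ln (ln (real y)) + 1/2) * (3/2)"
    using i32 lly by (intro mult_left_mono) auto
  finally have X: "(ln (ln (real y)) + ln (1 / ln 2)) / ln 2 \<le> (ln (ln (real y)) + 1/2) * (3/2)" .
  have aux: "\<And>(B::real) X a. B \<le> 45/10 + 4*X \<Longrightarrow> X \<le> (a+1/2)*(3/2) \<Longrightarrow> B \<le> 8 + 6*a"
    by (simp add: algebra_simps)
  show ?thesis by (rule aux[OF B X])
qed

lemma P_bounds:
  fixes P :: "nat set" and y :: nat
  assumes fin: "finite P" and pr: "\<And>p. p \<in> P \<Longrightarrow> prime p" and y1: "y \<ge> 1"
    and lnP: "ln (real (\<Prod>P)) \<le> real y"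
  shows "(\<Sum>p\<in>P. ln (real p) / real p) \<le> 2 * ln (real y) + 1"
    and "(\<Sum>p\<in>P. 1 / real p) \<le> Bsum y + 2"
proof -
  define P1 where "P1 = {p\<in>P. p \<le> y}"
  define P2 where "P2 = {p\<in>P. y < p}"
  have PU: "P = P1 \<union> P2" "P1 \<inter> P2 = {}" unfolding P1_def P2_def by auto
  have f12: "finite P1" "finite P2" using fin unfolding P1_def P2_def by auto
  have pos: "\<And>p. p \<in> P \<Longrightarrow> p \<ge> 2" using pr prime_ge_2_nat by blast
  have "\<Prod>P = \<Prod>P1 * \<Prod>P2" using PU f12 by (simp add: prod.union_disjoint)
  moreover have "\<Prod>P1 \<ge> 1" using pos unfolding P1_def
    by (intro prod_ge_1) (force)
  ultimately have "\<Prod>P2 \<le> \<Prod>P" by simp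
  then have "real (\<Prod>P2) \<le> real (\<Prod>P)" by linarith
  moreover have "real (\<Prod>P2) > 0" using pos unfolding P2_def by (auto intro!: prod_pos)
  ultimately have "ln (real (\<Prod>P2)) \<le> ln (real (\<Prod>P))" by simp
  also have "ln (real (\<Prod>P2)) = (\<Sum>p\<in>P2. ln (real p))"
    using f12 pos unfolding P2_def by (subst of_nat_prod, subst ln_prod) auto
  finally have S2: "(\<Sum>p\<in>P2. ln (real p)) \<le> real y" using lnP by linarith
  have T2: "(\<Sum>p\<in>P2. ln (real p) / real p) \<le> 1"
  proof -
    have "(\<Sum>p\<in>P2. ln (real p) / real p) \<le> (\<Sum>p\<in>P2. ln (real p) / real y)"
    proof (intro sum_mono)
      fix p assume p: "p \<in> P2"
      then have "p \<ge> 2" "real y \<le> real p" using pos unfolding P2_def by auto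
      then show "ln (real p) / real p \<le> ln (real p) / real y"
        using y1 by (intro divide_left_mono) auto
    qed
    also have "\<dots> = (\<Sum>p\<in>P2. ln (real p)) / real y" by (simp add: sum_divide_distrib)
    also have "\<dots> \<le> 1" using S2 y1 by simp
    finally show ?thesis .
  qed
  have T1: "(\<Sum>p\<in>P1. ln (real p) / real p) \<le> Asum y"
    unfolding Asum_def P1_def using pr
    by (intro sum_mono2) (auto intro!: divide_nonneg_nonneg ln_ge_zero simp: Suc_le_eq prime_gt_0_nat)
  have "(\<Sum>p\<in>P. ln (real p) / real p) = (\<Sum>p\<in>P1. ln (real p) / real p) + (\<Sum>p\<in>P2. ln (real p) / real p)"
    using PU f12 by (simp add: sum.union_disjoint)
  then show "(\<Sum>p\<in>P. ln (real p) / real p) \<le> 2 * ln (real y) + 1"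
    using T1 T2 Asum_bound[OF y1] by linarith
  have U1: "(\<Sum>p\<in>P1. 1 / real p) \<le> Bsum y"
    unfolding Bsum_def P1_def using pr
    by (intro sum_mono2) auto
  have l2: "ln 2 \<ge> (2/3::real)" by (rule ln2_ge_two_thirds)
  have "(\<Sum>p\<in>P2. 1 / real p) \<le> (\<Sum>p\<in>P2. (ln (real p) / real p) / ln 2)"
  proof (intro sum_mono)
    fix p assume p: "p \<in> P2"
    then have "p \<ge> 2" using pos unfolding P2_def by auto
    then have "ln 2 \<le> ln (real p)" by simp
    then show "1 / real p \<le> ln (real p) / real p / ln 2" using l2 \<open>p \<ge> 2\<close> by (simp add: field_simps)
  qed
  also have "\<dots> = (\<Sum>p\<in>P2. ln (real p) / real p) / ln 2" by (simp add: sum_divide_distrib)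
  also have "\<dots> \<le> 1 / ln 2" using T2 l2 by (intro divide_right_mono) auto
  also have "\<dots> \<le> 2" using l2 by (simp add: field_simps)
  finally have U2: "(\<Sum>p\<in>P2. 1 / real p) \<le> 2" .
  have "(\<Sum>p\<in>P. 1 / real p) = (\<Sum>p\<in>P1. 1 / real p) + (\<Sum>p\<in>P2. 1 / real p)"
    using PU f12 by (simp add: sum.union_disjoint)
  then show "(\<Sum>p\<in>P. 1 / real p) \<le> Bsum y + 2" using U1 U2 by linarith
qed

lemma pow_upper:
  fixes x :: real
  assumes "0 \<le> x" "x \<le> 1"
  shows "(1 - x) ^ k \<le> 1 - real k * x + (real k)^2 * x^2"
proof (induction k)
  case 0 then show ?case by simp
next
  case (Suc k)
  have "(1 - x) ^ Suc k = (1 - x) * (1 - x) ^ k" by simp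
  also have "\<dots> \<le> (1 - x) * (1 - real k * x + (real k)^2 * x^2)"
    using Suc assms by (intro mult_left_mono) auto
  also have "\<dots> = 1 - real (Suc k) * x + (real k + (real k)^2) * x^2 - (real k)^2 * x^3"
    by (simp add: algebra_simps power2_eq_square power3_eq_cube)
  also have "\<dots> \<le> 1 - real (Suc k) * x + (real (Suc k))^2 * x^2"
  proof -
    have "(real k + (real k)^2) * x^2 \<le> (real (Suc k))^2 * x^2"
      by (intro mult_right_mono) (auto simp: power2_eq_square algebra_simps)
    moreover have "(real k)^2 * x^3 \<ge> 0" using assms by simp
    ultimately show ?thesis by linarith
  qed
  finally show ?case .
qed

lemma nu_le: "finite H \<Longrightarrow> nu p H \<le> card H"
  unfolding nu_def by (rule card_image_le)

lemma sing_le: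
  fixes H :: "int set" and P :: "nat set"
  assumes fin: "finite H" and adm: "admissible H"
    and finP: "finite P" and Ppr: "\<And>p. p \<in> P \<Longrightarrow> prime p"
    and notP: "\<And>p. prime p \<Longrightarrow> p \<notin> P \<Longrightarrow> nu p H = card H"
  shows "sing_series H \<le> (\<Prod>p\<in>P. (1 / (1 - 1 / real p)) ^ card H)"
proof -
  define k where "k = card H"
  define g where "g = (\<lambda>n. if prime n
      then (1 - real (nu n H) / real n) * (1 - 1 / real n) powi (- int (card H))
      else 1)"
  define u where "u = (\<lambda>p::nat. (1 / (1 - 1 / real p)) ^ k)"
  have sing: "sing_series H = prodinf g" unfolding sing_series_def g_def by simp
  have gp: "g n = (1 - real (nu n H) / real n) / (1 - 1 / real n) ^ k" if "prime n" for n
    using that unfolding g_def k_def by (simp add: power_int_minus power_int_of_nat divide_inverse)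
  have facts: "0 < g n \<and> g n \<le> (if n \<in> P then u n else 1)" for n
  proof (cases "prime n")
    case False then show ?thesis unfolding g_def u_def using Ppr by (auto)
  next
    case True
    have n2: "real n \<ge> 2" using prime_ge_2_nat[OF True] by simp
    have nun: "nu n H < n" using adm True unfolding admissible_def by auto
    have a0: "0 < 1 - real (nu n H) / real n" using nun n2 by (simp add: field_simps)
    have q0: "0 < 1 - 1 / real n" using n2 by (simp add: field_simps)
    have gpos: "0 < g n" using gp[OF True] a0 q0 by simp
    show ?thesis
    proof (cases "n \<in> P")
      case True': True
      have "g n \<le> 1 / (1 - 1 / real n) ^ k"
        using gp[OF True] q0 by (auto intro!: divide_right_mono)
      then show ?thesis using gpos True' unfolding u_def by (simp add: power_one_over)
    next
      case False
      have nuk: "nu n H = k" using notP[OF True False] k_def by simp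
      have "1 + real k * (- 1 / real n) \<le> (1 + (- 1 / real n)) ^ k"
        using n2 by (intro Bernoulli_inequality) (auto simp: field_simps)
      then have "1 - real k / real n \<le> (1 - 1 / real n) ^ k" by simp
      then have "g n \<le> 1" using gp[OF True] nuk q0 by (simp add: divide_le_eq_1)
      then show ?thesis using gpos False by simp
    qed
  qed
  obtain N where N': "\<forall>p\<in>P. p < N" using finite_nat_set_iff_bounded[THEN iffD1, OF finP] by blast
  have N: "\<And>p. p \<in> P \<Longrightarrow> p < N" using N' by blast
  have bnd: "norm (g n - 1) \<le> 2 * (real k)^2 * inverse (real n ^ 2)" if n: "n \<ge> N + 2 * k + 2" for n
  proof (cases "prime n")
    case False then show ?thesis unfolding g_def by simp
  next
    case True
    have nP: "n \<notin> P" using N n by fastforce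
    have nuk: "nu n H = k" using notP[OF True nP] k_def by simp
    have n2: "real n \<ge> 2 * real k + 2" using n by linarith
    define x where "x = 1 / real n"
    have x0: "0 \<le> x" "x \<le> 1" using n2 unfolding x_def by auto
    have kx: "real k * x \<le> 1/2" using n2 unfolding x_def by (simp add: field_simps)
    define a where "a = 1 - real k * x"
    have a: "a \<ge> 1/2" using kx unfolding a_def by simp
    have gx: "g n = a / (1 - x) ^ k" using gp[OF True] nuk unfolding a_def x_def by simp
    have up: "(1 - x) ^ k \<le> a + (real k)^2 * x^2" using pow_upper[OF x0, of k] unfolding a_def by simp
    have lo: "a \<le> (1 - x) ^ k" using Bernoulli_inequality[of "-x" k] x0 unfolding a_def by simp
    have qpos: "(1 - x) ^ k > 0" using a lo by linarith
    have "g n \<le> 1" using gx lo qpos by (simp add: divide_le_eq_1)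
    then have "norm (g n - 1) = 1 - g n" by simp
    also have "\<dots> = ((1 - x) ^ k - a) / (1 - x) ^ k" using gx qpos by (simp add: diff_divide_distrib del: power_eq_0_iff)
    also have "\<dots> \<le> ((real k)^2 * x^2) / (1 - x) ^ k" using up qpos by (intro divide_right_mono) auto
    also have "\<dots> \<le> ((real k)^2 * x^2) / (1/2)" using a lo by (intro divide_left_mono) auto
    also have "\<dots> = 2 * (real k)^2 * inverse (real n ^ 2)" unfolding x_def by (simp add: field_simps)
    finally show ?thesis .
  qed
  have summ: "summable (\<lambda>n. 2 * (real k)^2 * inverse (real n ^ 2))"
    by (intro summable_mult inverse_power_summable) simp
  have "summable (\<lambda>n. norm (g n - 1))"
    by (rule summable_comparison_test'[OF summ, of "N + 2 * k + 2"]) (use bnd in simp)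
  then have "summable (\<lambda>n. \<bar>g n - 1\<bar>)" by simp
  then have "convergent_prod (\<lambda>n. 1 + (g n - 1))"
  proof (rule summable_imp_convergent_prod_real)
    fix n show "g n - 1 \<noteq> - 1" using facts[of n] by auto
  qed
  then have cp: "convergent_prod g" by simp
  have "prodinf g \<le> (\<Prod>p\<in>P. u p)"
  proof (rule prodinf_le_const[OF cp])
    fix n :: nat
    define A where "A = {..<n} \<inter> P"
    define B where "B = {..<n} - P"
    have "prod g {..<n} = prod g A * prod g B" unfolding A_def B_def by (rule prod.Int_Diff) simp
    also have "prod g B \<le> 1" unfolding B_def
    proof (intro prod_le_1)
      fix x assume "x \<in> {..<n} - P" then show "0 \<le> g x \<and> g x \<le> 1" using facts[of x] by auto
    qed
    then have "prod g A * prod g B \<le> prod g A * 1"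
      using facts by (intro mult_left_mono prod_nonneg) (auto simp: less_imp_le)
    also have "prod g A \<le> prod u A" unfolding A_def
    proof (intro prod_mono)
      fix x assume "x \<in> {..<n} \<inter> P" then show "0 \<le> g x \<and> g x \<le> u x" using facts[of x] by auto
    qed
    also have "prod u A \<le> prod u P"
    proof -
      have u1: "u p \<ge> 1" if "p \<in> P" for p
      proof -
        have p2: "real p \<ge> 2" using Ppr[OF that] prime_ge_2_nat by fastforce
        then have "1 - 1 / real p > 0" "1 - 1 / real p \<le> 1" by (auto simp: field_simps)
        then have "1 / (1 - 1 / real p) \<ge> 1" by (simp add: le_divide_eq_1)
        then show ?thesis unfolding u_def by (simp add: one_le_power)
      qed
      have AP: "A \<subseteq> P" unfolding A_def by auto
      have "prod u P = prod u (P - A) * prod u A" using finP AP by (metis prod.subset_diff)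
      moreover have "prod u (P - A) \<ge> 1" using u1 by (intro prod_ge_1) auto
      moreover have "prod u A \<ge> 0" using u1 AP by (intro prod_nonneg) (auto intro: order_trans[OF zero_le_one])
      ultimately show ?thesis by (metis mult_left_mono mult_1 mult.commute)
    qed
    finally show "prod g {..<n} \<le> prod u P" by simp
  qed
  then show ?thesis unfolding sing u_def k_def .
qed

lemma H_P:
  fixes H :: "int set" and h :: real
  assumes fin: "finite H" and cH: "card H = k" and k2: "k \<ge> 2" and adm: "admissible H"
    and hb: "\<forall>x\<in>H. \<bar>real_of_int x\<bar> \<le> h"
  defines "P \<equiv> {p. prime p \<and> nu p H < card H}"
  shows "h \<ge> 1" "finite P" "ln (real (\<Prod>P)) \<le> real (k^2) * ln (2 * h)" "2 \<in> P"
proof -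
  obtain x y where xy: "x \<in> H" "y \<in> H" "x \<noteq> y"
  proof -
    have "card H \<ge> 2" using cH k2 by simp
    then obtain A where "A \<subseteq> H" "card A = 2" by (metis obtain_subset_with_card_n)
    then obtain a b where "A = {a, b}" "a \<noteq> b" by (auto simp: card_2_iff)
    then show ?thesis using that \<open>A \<subseteq> H\<close> by auto
  qed
  show h1: "h \<ge> 1"
  proof (cases "x = 0")
    case True
    then have "y \<noteq> 0" using xy by simp
    then have "\<bar>real_of_int y\<bar> \<ge> 1" by linarith
    then show ?thesis using hb xy by force
  next
    case False
    then have "\<bar>real_of_int x\<bar> \<ge> 1" by linarith
    then show ?thesis using hb xy by force
  qed
  define Off where "Off = {q\<in>H\<times>H. fst q \<noteq> snd q}"
  define D where "D = (\<Prod>q\<in>Off. nat \<bar>fst q - snd q\<bar>)"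
  have finOff: "finite Off" unfolding Off_def using fin by simp
  have Dpos: "D > 0" unfolding D_def Off_def by (intro prod_pos) auto
  have dvdD: "p dvd D" if "p \<in> P" for p
  proof -
    have "nu p H < card H" using that unfolding P_def by simp
    then have "\<not> inj_on (\<lambda>x. x mod int p) H" unfolding nu_def using card_image by fastforce
    then obtain a b where ab: "a \<in> H" "b \<in> H" "a \<noteq> b" "a mod int p = b mod int p"
      unfolding inj_on_def by blast
    then have "int p dvd a - b" by (simp add: mod_eq_dvd_iff)
    then have "int p dvd \<bar>a - b\<bar>" by simp
    also have "\<bar>a - b\<bar> = int (nat \<bar>a - b\<bar>)" by simp
    finally have "p dvd nat \<bar>a - b\<bar>" by (simp only: int_dvd_int_iff)
    moreover have "(a, b) \<in> Off" using ab unfolding Off_def by simp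
    then have "nat \<bar>a - b\<bar> dvd D"
      using dvd_prodI[OF finOff \<open>(a, b) \<in> Off\<close>, of "\<lambda>q. nat \<bar>fst q - snd q\<bar>"]
      unfolding D_def by (simp only: fst_conv snd_conv)
    ultimately show ?thesis by (rule dvd_trans)
  qed
  have PD: "P \<subseteq> {..D}" using dvdD Dpos by (auto intro: dvd_imp_le)
  show finP: "finite P" using PD finite_subset by blast
  have "\<Prod>P dvd D" using finP dvdD by (intro prod_primes_dvd) (auto simp: P_def)
  then have "\<Prod>P \<le> D" using Dpos by (simp add: dvd_imp_le)
  then have PleD: "real (\<Prod>P) \<le> real D" by linarith
  have Ppos: "real (\<Prod>P) > 0" unfolding P_def by (auto intro!: prod_pos simp: prime_gt_0_nat)
  have "real D = (\<Prod>q\<in>Off. real (nat \<bar>fst q - snd q\<bar>))" unfolding D_def by simp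
  also have "\<dots> \<le> (\<Prod>q\<in>Off. 2 * h)"
  proof (intro prod_mono conjI)
    fix q assume "q \<in> Off"
    then have "fst q \<in> H" "snd q \<in> H" unfolding Off_def by auto
    then have "\<bar>real_of_int (fst q)\<bar> \<le> h" "\<bar>real_of_int (snd q)\<bar> \<le> h" using hb by auto
    then show "real (nat \<bar>fst q - snd q\<bar>) \<le> 2 * h" by simp
  qed simp
  also have "\<dots> = (2 * h) ^ card Off" by simp
  also have "\<dots> \<le> (2 * h) ^ (k^2)"
  proof (intro power_increasing)
    have "card Off \<le> card (H \<times> H)" unfolding Off_def using fin by (intro card_mono) auto
    then show "card Off \<le> k^2" using cH by (simp add: card_cartesian_product power2_eq_square)
  qed (use h1 in simp)
  finally have "real (\<Prod>P) \<le> (2 * h) ^ (k^2)" using PleD by linarith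
  then have "ln (real (\<Prod>P)) \<le> ln ((2 * h) ^ (k^2))" using Ppos by simp
  also have "\<dots> = real (k^2) * ln (2 * h)" using h1 by (subst ln_realpow) auto
  finally show "ln (real (\<Prod>P)) \<le> real (k^2) * ln (2 * h)" .
  have "nu 2 H < 2" using adm unfolding admissible_def by simp
  then show "2 \<in> P" unfolding P_def using cH k2 by simp
qed

lemma inv_factor_le:
  assumes "p \<ge> (2::nat)"
  shows "(1 / (1 - 1 / real p)) ^ k \<le> exp (real k * (2 / real p))"
proof -
  have p2: "real p \<ge> 2" using assms by simp
  have "1 / (1 - 1 / real p) = 1 + 1 / (real p - 1)" using p2 by (simp add: field_simps)
  also have "\<dots> \<le> exp (1 / (real p - 1))" by (rule exp_ge_add_one_self)
  also have "\<dots> \<le> exp (2 / real p)" using p2 by (simp add: field_simps)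
  finally have le: "1 / (1 - 1 / real p) \<le> exp (2 / real p)" .
  have nn: "0 \<le> 1 / (1 - 1 / real p)" using p2 by (simp add: field_simps)
  have "(1 / (1 - 1 / real p)) ^ k \<le> exp (2 / real p) ^ k" by (rule power_mono[OF le nn])
  also have "\<dots> = exp (real k * (2 / real p))" by (rule exp_of_nat_mult[symmetric])
  finally show ?thesis .
qed

theorem lemma6:
  fixes k :: nat
  assumes "k \<ge> 2"
  shows "\<exists>c::real > 0. \<exists>C::real. \<exists>b::real. \<forall>(H::int set) (h::real).
           finite H \<and> card H = k \<and> admissible H \<and> (\<forall>x\<in>H. \<bar>real_of_int x\<bar> \<le> h) \<longrightarrow>
             c \<le> beta H \<and> beta H \<le> C * ln (ln (10 * h)) \<and>
             sing_series H \<le> C * ln (ln (10 * h)) powr b"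
proof -
  define K :: real where "K = 2 * ln (2 * real k ^ 2) + 1"
  define C1 where "C1 = real k * (2 * K + 2)"
  define C2 where "C2 = exp (20 * real k) * K powr (12 * real k)"
  define C where "C = max C1 C2"
  have k2: "real k \<ge> 2" using assms by simp
  have kk4: "real k ^ 2 \<ge> 4" using power_mono[OF k2, of 2] by simp
  have lnk: "ln (2 * real k ^ 2) \<ge> 0" using kk4 by simp
  have K1: "K \<ge> 1" unfolding K_def using lnk by simp
  have l2: "ln 2 \<ge> (2/3::real)" by (rule ln2_ge_two_thirds)
  have main: "ln 2 / 2 \<le> beta H \<and> beta H \<le> C * ln (ln (10 * h)) \<and>
             sing_series H \<le> C * ln (ln (10 * h)) powr (12 * real k)"
    if fin: "finite H" and cH: "card H = k" and adm: "admissible H"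
      and hb: "\<forall>x\<in>H. \<bar>real_of_int x\<bar> \<le> h" for H h
  proof -
    define P where "P = {p. prime p \<and> nu p H < card H}"
    note HP = H_P[OF fin cH assms adm hb, folded P_def]
    have h1: "h \<ge> 1" and finP: "finite P" and lnP: "ln (real (\<Prod>P)) \<le> real (k^2) * ln (2 * h)"
      and P2: "2 \<in> P" using HP by auto
    have Ppr: "\<And>p. p \<in> P \<Longrightarrow> prime p" unfolding P_def by simp
    have notP: "\<And>p. prime p \<Longrightarrow> p \<notin> P \<Longrightarrow> nu p H = card H"
      unfolding P_def using nu_le[OF fin] by (simp add: not_less le_antisym)
    define ell where "ell = ln (ln (10 * h))"
    have e2: "exp 2 \<le> (10::real)"
    proof -
      have "exp (2::real) = exp 1 * exp 1" by (simp flip: exp_add)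
      also have "\<dots> \<le> 3 * 3" using exp_le by (intro mult_mono) auto
      finally show ?thesis by simp
    qed
    have L2: "ln (10 * h) \<ge> 2"
    proof -
      have "exp 2 \<le> 10 * h" using e2 h1 by simp
      then show ?thesis using h1 by (subst ln_ge_iff) auto
    qed
    have l_ge: "ell \<ge> 2/3" unfolding ell_def using L2 l2 by (smt (verit) ln_le_cancel_iff)
    define y where "y = nat \<lceil>real k ^ 2 * ln (10 * h)\<rceil>"
    have x8: "real k ^ 2 * ln (10 * h) \<ge> 4 * 2" using kk4 L2 by (intro mult_mono) auto
    have ry: "real y = real_of_int \<lceil>real k ^ 2 * ln (10 * h)\<rceil>"
      unfolding y_def using x8 by (intro of_nat_nat) linarith
    have y1: "real y \<ge> real k ^ 2 * ln (10 * h)" "real y \<le> real k ^ 2 * ln (10 * h) + 1"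
      unfolding ry by linarith+
    then have y8: "real y \<ge> 8" using x8 by linarith
    then have y3: "y \<ge> 3" by simp
    have "ln (2 * h) \<le> ln (10 * h)" using h1 by simp
    then have "real (k^2) * ln (2 * h) \<le> real k ^ 2 * ln (10 * h)" by (simp add: mult_left_mono)
    then have lnPy: "ln (real (\<Prod>P)) \<le> real y" using lnP y1 by linarith
    note PB = P_bounds[OF finP Ppr _ lnPy]
    have S1: "(\<Sum>p\<in>P. ln (real p) / real p) \<le> 2 * ln (real y) + 1" using PB(1) y3 by simp
    have S2: "(\<Sum>p\<in>P. 1 / real p) \<le> 10 + 6 * ln (ln (real y))"
      using PB(2) y3 Bsum_bound[OF y3] by simp
    have "ln (real y) \<le> ln (2 * real k ^ 2 * ln (10 * h))"
    proof -
      have "real k ^ 2 * ln (10 * h) \<ge> 1" using x8 by simp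
      then have "real y \<le> 2 * real k ^ 2 * ln (10 * h)" using y1 by simp
      then show ?thesis using y8 by simp
    qed
    also have "\<dots> = ln (2 * real k ^ 2) + ell" unfolding ell_def using L2 k2 by (simp add: ln_mult)
    also have "\<dots> \<le> K * ell"
    proof -
      have "1 \<le> 2 * ell" using l_ge by simp
      then have "ln (2 * real k ^ 2) * 1 \<le> ln (2 * real k ^ 2) * (2 * ell)"
        using lnk by (intro mult_left_mono) auto
      then have "ln (2 * real k ^ 2) \<le> 2 * ln (2 * real k ^ 2) * ell" by simp
      then show ?thesis unfolding K_def by (simp add: algebra_simps)
    qed
    finally have lny: "ln (real y) \<le> K * ell" .
    define f where "f = (\<lambda>p::nat. (real (card H) - real (nu p H)) * ln (real p) / real p)"
    have beta_eq: "beta H = (\<Sum>p\<in>P. f p)"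
    proof -
      have "beta H = infsum f {p. prime p}" unfolding beta_def f_def by simp
      also have "\<dots> = infsum f P"
        by (rule infsum_cong_neutral) (auto simp: P_def f_def notP)
      also have "\<dots> = (\<Sum>p\<in>P. f p)" using finP by simp
      finally show ?thesis .
    qed
    have f0: "f p \<ge> 0" if "p \<in> P" for p
      using nu_le[OF fin, of p] prime_ge_1_nat[OF Ppr[OF that]] unfolding f_def
      by (intro divide_nonneg_nonneg mult_nonneg_nonneg) auto
    have "f 2 \<ge> ln 2 / 2"
    proof -
      have "nu 2 H < 2" using adm unfolding admissible_def by simp
      then have "real (card H) - real (nu 2 H) \<ge> 1" using cH assms by linarith
      then show ?thesis unfolding f_def by (simp add: divide_right_mono mult_le_cancel_right1)
    qed
    moreover have "f 2 \<le> (\<Sum>p\<in>P. f p)" using finP P2 f0 by (intro member_le_sum) auto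
    ultimately have blow: "ln 2 / 2 \<le> beta H" using beta_eq by simp
    have "(\<Sum>p\<in>P. f p) \<le> (\<Sum>p\<in>P. real k * (ln (real p) / real p))"
    proof (intro sum_mono)
      fix p assume "p \<in> P"
      then have "p \<ge> 1" using Ppr prime_ge_1_nat by blast
      then have "ln (real p) / real p \<ge> 0" by simp
      then have "(real k - real (nu p H)) * (ln (real p) / real p) \<le> real k * (ln (real p) / real p)"
        by (intro mult_right_mono) auto
      then show "f p \<le> real k * (ln (real p) / real p)" unfolding f_def cH
        by (simp add: times_divide_eq_right)
    qed
    also have "\<dots> = real k * (\<Sum>p\<in>P. ln (real p) / real p)" by (simp add: sum_distrib_left)
    also have "\<dots> \<le> real k * (2 * (K * ell) + 1)" using S1 lny by (intro mult_left_mono) auto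
    also have "\<dots> \<le> real k * (2 * K + 2) * ell"
    proof -
      have "1 \<le> 2 * ell" using l_ge by simp
      then have "2 * (K * ell) + 1 \<le> (2 * K + 2) * ell" by (simp add: algebra_simps)
      then show ?thesis by (simp add: mult_left_mono mult.assoc)
    qed
    also have "\<dots> \<le> C * ell" unfolding C1_def[symmetric] C_def using l_ge by (intro mult_right_mono) auto
    finally have bup: "beta H \<le> C * ell" using beta_eq by simp
    have "sing_series H \<le> (\<Prod>p\<in>P. (1 / (1 - 1 / real p)) ^ card H)"
      by (rule sing_le[OF fin adm finP Ppr notP])
    also have "\<dots> \<le> (\<Prod>p\<in>P. exp (real k * (2 / real p)))"
    proof (intro prod_mono conjI)
      fix p assume "p \<in> P"
      then have p2: "p \<ge> 2" using Ppr prime_ge_2_nat by blast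
      then have "0 \<le> 1 / (1 - 1 / real p)" by (simp add: field_simps)
      then show "0 \<le> (1 / (1 - 1 / real p)) ^ card H" by simp
      show "(1 / (1 - 1 / real p)) ^ card H \<le> exp (real k * (2 / real p))"
        using inv_factor_le[OF p2, of k] cH by simp
    qed
    also have "\<dots> = exp (2 * real k * (\<Sum>p\<in>P. 1 / real p))"
      using finP by (simp add: exp_sum sum_distrib_left algebra_simps)
    also have "\<dots> \<le> exp (2 * real k * (10 + 6 * ln (ln (real y))))"
      using S2 by (simp add: mult_left_mono)
    also have "\<dots> = exp (20 * real k) * exp (12 * real k * ln (ln (real y)))"
      by (simp add: algebra_simps flip: exp_add)
    also have "exp (12 * real k * ln (ln (real y))) = ln (real y) powr (12 * real k)"
    proof -
      have "ln (real y) > 0" using y8 by simp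
      then show ?thesis by (simp add: powr_def)
    qed
    also have "ln (real y) powr (12 * real k) \<le> (K * ell) powr (12 * real k)"
      using lny y8 by (intro powr_mono2) auto
    also have "(K * ell) powr (12 * real k) = K powr (12 * real k) * ell powr (12 * real k)"
      using K1 l_ge by (simp add: powr_mult)
    finally have "sing_series H \<le> C2 * ell powr (12 * real k)"
      unfolding C2_def by (simp add: mult.assoc mult_left_mono)
    also have "\<dots> \<le> C * ell powr (12 * real k)" unfolding C_def by (intro mult_right_mono) auto
    finally show ?thesis using blow bup unfolding ell_def by simp
  qed
  show ?thesis
    by (rule exI[of _ "ln 2 / 2"], intro conjI, simp, rule exI[of _ C], rule exI[of _ "12 * real k"])
       (use main in blast)
qed

end
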